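(* Let $f(\cdot;w)$ be a ReLU multilayer perceptron on $\mathbb{R}^{n_0}$ with parameter vector $w\in\mathbb{R}^p$ (fixed architecture $n_0,n_1,\dots,n_{L+1}$, $L\ge 1$). Then there exists a set $B\subset\mathbb{R}^p$ of Lebesgue measure zero such that for every $w_0\in\mathbb{R}^p\setminus B$ there is a set $Z\subset\mathbb{R}^{n_0}$ of Lebesgue measure zero with the following property: for every $x\in\mathbb{R}^{n_0}\setminus Z$ there exists $\varepsilon>0$ such that for all $w\in\mathbb{R}^p$ with $\|w-w_0\|<\varepsilon$ one has $\mathrm{act}(x;w)=\mathrm{act}(x;w_0)$.
   Context: A ReLU multilayer perceptron (MLP) with $L$ hidden layers and widths $n_0,n_1,\dots,n_L,n_{L+1}$ has parameters $w=(W_0,b_0,W_1,b_1,\dots,W_L,b_L)\in\mathbb{R}^p$ with $W_l\in\mathbb{R}^{n_{l+1}\times n_l}$, $b_l\in\mathbb{R}^{n_{l+1}}$ (all entries concatenated into one vector of length $p$). For $x\in\mathbb{R}^{n_0}$ set $h_0(x;w)=x$ and for $l=1,\dots,L$ define the pre-activations $z_l(x;w)=W_{l-1}h_{l-1}(x;w)+b_{l-1}\in\mathbb{R}^{n_l}$ and activations $h_l(x;w)=\sigma(z_l(x;w))$, where $\sigma(t)=\max(t,0)$ is applied elementwise; the output is $f(x;w)=W_Lh_L(x;w)+b_L\in\mathbb{R}^{n_{L+1}}$. The activation pattern of $x$ under $w$ is $\mathrm{act}(x;w)=(\mathrm{act}_1(x;w),\dots,\mathrm{act}_L(x;w))$ where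 $\mathrm{act}_l(x;w)=\mathbf{1}\{z_l(x;w)>0\}\in\{0,1\}^{n_l}$ (componentwise indicator). Measure means Lebesgue measure; $\|\cdot\|$ is any norm on $\mathbb{R}^p$. *)

theory Defs
  imports "HOL-Probability.Probability"
begin

text \<open>Architecture: a list ns = [n_0, n_1, ..., n_L, n_(L+1)] of widths, L = length ns - 2.
  Parameters are a flat vector w in R^p, represented as a function nat => real whose
  coordinates 0..p-1 are used. The concatenation order is W_0, b_0, W_1, b_1, ..., W_L, b_L,
  each matrix W_l (n_(l+1) x n_l) stored row-major.\<close>

definition mlp_depth :: "nat list \<Rightarrow> nat" where
  "mlp_depth ns = length ns - 2"

definition layer_size :: "nat list \<Rightarrow> nat \<Rightarrow> nat" where
  "layer_size ns l = ns ! (Suc l) * ns ! l + ns ! (Suc l)"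

definition layer_offset :: "nat list \<Rightarrow> nat \<Rightarrow> nat" where
  "layer_offset ns l = (\<Sum>k<l. layer_size ns k)"

definition num_params :: "nat list \<Rightarrow> nat" where
  "num_params ns = layer_offset ns (Suc (mlp_depth ns))"

definition weight :: "nat list \<Rightarrow> (nat \<Rightarrow> real) \<Rightarrow> nat \<Rightarrow> nat \<Rightarrow> nat \<Rightarrow> real" where
  "weight ns w l i j = w (layer_offset ns l + i * ns ! l + j)"

definition bias :: "nat list \<Rightarrow> (nat \<Rightarrow> real) \<Rightarrow> nat \<Rightarrow> nat \<Rightarrow> real" where
  "bias ns w l i = w (layer_offset ns l + ns ! (Suc l) * ns ! l + i)"

fun hidden :: "nat list \<Rightarrow> (nat \<Rightarrow> real) \<Rightarrow> (nat \<Rightarrow> real) \<Rightarrow> nat \<Rightarrow> nat \<Rightarrow> real"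
and preact :: "nat list \<Rightarrow> (nat \<Rightarrow> real) \<Rightarrow> (nat \<Rightarrow> real) \<Rightarrow> nat \<Rightarrow> nat \<Rightarrow> real" where
  "hidden ns x w 0 = x"
| "hidden ns x w (Suc l) = (\<lambda>i. max (preact ns x w l i) 0)"
| "preact ns x w l = (\<lambda>i. (\<Sum>j<ns ! l. weight ns w l i j * hidden ns x w l j) + bias ns w l i)"

text \<open>Note: preact ns x w l is z_(l+1). The network output f(x;w) = W_L h_L + b_L.\<close>
definition mlp_output :: "nat list \<Rightarrow> (nat \<Rightarrow> real) \<Rightarrow> (nat \<Rightarrow> real) \<Rightarrow> nat \<Rightarrow> real" where
  "mlp_output ns x w = preact ns x w (mlp_depth ns)"

text \<open>Activation pattern: act l i = [z_l(x;w)_i > 0] for 1 <= l <= L, i < n_l;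
  out-of-range indices are set to False, so equality of these functions is equality
  of the tuples (act_1, ..., act_L).\<close>
definition act :: "nat list \<Rightarrow> (nat \<Rightarrow> real) \<Rightarrow> (nat \<Rightarrow> real) \<Rightarrow> nat \<Rightarrow> nat \<Rightarrow> bool" where
  "act ns x w = (\<lambda>l i. 1 \<le> l \<and> l \<le> mlp_depth ns \<and> i < ns ! l \<and> preact ns x w (l - 1) i > 0)"

text \<open>Lebesgue measure on R^n, with R^n represented as extensional functions on {..<n}.\<close>
definition lebesgue_n :: "nat \<Rightarrow> (nat \<Rightarrow> real) measure" where
  "lebesgue_n n = completion (Pi\<^sub>M {..<n} (\<lambda>_. lborel))"

definition norm_n :: "nat \<Rightarrow> (nat \<Rightarrow> real) \<Rightarrow> real" where
  "norm_n n v = sqrt (\<Sum>i<n. (v i)\<^sup>2)"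

end

theory Submission
  imports Defs
begin

interpretation PS: product_sigma_finite "\<lambda>_::nat. lborel::real measure"
  by unfold_locales

lemma comp_meas:
  assumes "finite I"
  shows "(\<lambda>w::nat\<Rightarrow>real. w k) \<in> borel_measurable (PiM I (\<lambda>_. lborel))"
proof (cases "k \<in> I")
  case True
  then show ?thesis using measurable_component_singleton[of k I "\<lambda>_. lborel"] by simp
next
  case False
  have "(\<lambda>w::nat\<Rightarrow>real. w k) \<in> borel_measurable (PiM I (\<lambda>_. lborel)) \<longleftrightarrow>
        (\<lambda>w::nat\<Rightarrow>real. undefined::real) \<in> borel_measurable (PiM I (\<lambda>_. lborel))"
    by (intro measurable_cong) (use False in \<open>auto simp: space_PiM PiE_def extensional_def\<close>)
  then show ?thesis by simp
qed

lemma hidden_meas: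
  assumes X: "\<And>j. (\<lambda>z. X z j) \<in> borel_measurable M"
    and W: "\<And>j. (\<lambda>z. Wf z j) \<in> borel_measurable M"
  shows "(\<lambda>z. hidden ns (X z) (Wf z) l i) \<in> borel_measurable M"
proof (induction l arbitrary: i)
  case 0
  then show ?case using X by simp
next
  case (Suc l)
  show ?case
    unfolding hidden.simps preact.simps weight_def bias_def
    by (intro borel_measurable_max borel_measurable_sum borel_measurable_add
          borel_measurable_times W Suc borel_measurable_const)
qed

lemma preact_meas:
  assumes X: "\<And>j. (\<lambda>z. X z j) \<in> borel_measurable M"
    and W: "\<And>j. (\<lambda>z. Wf z j) \<in> borel_measurable M"
  shows "(\<lambda>z. preact ns (X z) (Wf z) l i) \<in> borel_measurable M"
  unfolding preact.simps weight_def bias_def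
  by (intro borel_measurable_sum borel_measurable_add
          borel_measurable_times W hidden_meas[OF X W])

lemma hidden_tendsto:
  assumes "\<And>j. (\<lambda>k. ws k j) \<longlonglongrightarrow> w0 j"
  shows "(\<lambda>k. hidden ns x (ws k) l i) \<longlonglongrightarrow> hidden ns x w0 l i"
proof (induction l arbitrary: i)
  case 0
  then show ?case by simp
next
  case (Suc l)
  show ?case
    unfolding hidden.simps preact.simps weight_def bias_def
    by (intro tendsto_max tendsto_sum tendsto_add tendsto_mult assms Suc tendsto_const)
qed

lemma preact_tendsto:
  assumes "\<And>j. (\<lambda>k. ws k j) \<longlonglongrightarrow> w0 j"
  shows "(\<lambda>k. preact ns x (ws k) l i) \<longlonglongrightarrow> preact ns x w0 l i"
  unfolding preact.simps weight_def bias_def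
  by (intro tendsto_sum tendsto_add tendsto_mult assms hidden_tendsto tendsto_const)

lemma offset_Suc: "layer_offset ns (Suc l) = layer_offset ns l + layer_size ns l"
  by (simp add: layer_offset_def)

lemma offset_mono: "l \<le> l' \<Longrightarrow> layer_offset ns l \<le> layer_offset ns l'"
  unfolding layer_offset_def by (intro sum_mono2) auto

lemma hidden_agree:
  assumes "\<And>j. j < layer_offset ns l \<Longrightarrow> w j = w' j" "j < ns ! l"
  shows "hidden ns x w l j = hidden ns x w' l j"
  using assms
proof (induction l arbitrary: j)
  case 0
  then show ?case by simp
next
  case (Suc l)
  have agl: "\<And>j. j < layer_offset ns l \<Longrightarrow> w j = w' j"
    using Suc.prems(1) offset_mono[of l "Suc l" ns] by auto
  have hl: "\<And>k. k < ns ! l \<Longrightarrow> hidden ns x w l k = hidden ns x w' l k"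
    using Suc.IH agl by blast
  have idx: "j * ns ! l + k < ns ! Suc l * ns ! l" if "k < ns ! l" for k
  proof -
    have "j * ns ! l + k < j * ns ! l + ns ! l" using that by simp
    also have "\<dots> = Suc j * ns ! l" by simp
    also have "\<dots> \<le> ns ! Suc l * ns ! l" using Suc.prems(2) by (intro mult_right_mono) auto
    finally show ?thesis .
  qed
  then have wt: "weight ns w l j k = weight ns w' l j k" if "k < ns ! l" for k
  proof -
    have "j * ns ! l + k < ns ! Suc l * ns ! l" using that idx by blast
    then show ?thesis
    unfolding weight_def using Suc.prems offset_Suc[of ns l] 
    by (intro Suc.prems(1)) (simp add: layer_size_def)
  qed
  have bs: "bias ns w l j = bias ns w' l j"
    unfolding bias_def using Suc.prems offset_Suc[of ns l]
    by (intro Suc.prems(1)) (auto simp: layer_size_def)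
  show ?case using wt bs hl by simp
qed

lemma c_lt_p:
  assumes "l < mlp_depth ns" "i < ns ! Suc l"
  shows "layer_offset ns l + ns ! Suc l * ns ! l + i < num_params ns"
proof -
  have "layer_offset ns l + ns ! Suc l * ns ! l + i < layer_offset ns (Suc l)"
    using assms by (simp add: offset_Suc layer_size_def)
  also have "\<dots> \<le> num_params ns" unfolding num_params_def
    using assms by (intro offset_mono) simp
  finally show ?thesis .
qed

lemma preact_null:
  assumes "l < mlp_depth ns" "i < ns ! Suc l"
  shows "AE w in PiM {..<num_params ns} (\<lambda>_. lborel::real measure). preact ns x w l i \<noteq> 0"
proof -
  define p where "p = num_params ns"
  define c where "c = layer_offset ns l + ns ! Suc l * ns ! l + i"
  define I where "I = {..<p} - {c}"
  define Mp where "Mp = PiM {..<p} (\<lambda>_. lborel::real measure)"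
  have cp: "c < p" unfolding c_def p_def using c_lt_p[OF assms] .
  have eqI: "{..<p} = insert c I" unfolding I_def using cp by auto
  have fI: "finite I" "c \<notin> I" unfolding I_def by auto
  define S where "S = {w \<in> space Mp. preact ns x w l i = 0}"
  have pm: "(\<lambda>w. preact ns x w l i) \<in> borel_measurable Mp"
    unfolding Mp_def by (rule preact_meas[where X="\<lambda>_. x"]) (auto intro: comp_meas)
  have Ssets: "S \<in> sets Mp" unfolding S_def using pm by measurable
  define G where "G v = (\<Sum>j<ns ! l. weight ns v l i j * hidden ns x v l j)" for v
  have key: "preact ns x (v(c:=y)) l i = G v + y" for v y
  proof -
    have b: "bias ns (v(c:=y)) l i = y" unfolding bias_def c_def by simp
    have w: "weight ns (v(c:=y)) l i j = weight ns v l i j" if "j < ns ! l" for j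
    proof -
      have "i * ns ! l + j < ns ! Suc l * ns ! l"
      proof -
        have "i * ns ! l + j < i * ns ! l + ns ! l" using that by simp
        also have "\<dots> = Suc i * ns ! l" by simp
        also have "\<dots> \<le> ns ! Suc l * ns ! l" using assms(2) by (intro mult_right_mono) auto
        finally show ?thesis .
      qed
      then show ?thesis unfolding weight_def c_def by simp
    qed
    have h: "hidden ns x (v(c:=y)) l j = hidden ns x v l j" if "j < ns ! l" for j
      by (rule hidden_agree[OF _ that]) (auto simp: c_def)
    show ?thesis using b w h by (simp add: G_def)
  qed
  have ind: "indicator S (v(c:=y)) = (indicator {- G v} y :: ennreal)" if "v \<in> space (PiM I (\<lambda>_. lborel::real measure))" for v y
  proof -
    have "v(c:=y) \<in> space Mp" using that unfolding Mp_def eqI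
      by (auto simp: space_PiM PiE_def extensional_def)
    then show ?thesis unfolding S_def indicator_def using key[of v y] by auto
  qed
  have "emeasure Mp S = (\<integral>\<^sup>+ w. indicator S w \<partial>Mp)"
    using Ssets by simp
  also have "\<dots> = (\<integral>\<^sup>+ v. (\<integral>\<^sup>+ y. indicator S (v(c := y)) \<partial>lborel) \<partial>(PiM I (\<lambda>_. lborel::real measure)))"
    unfolding Mp_def eqI
    by (rule PS.product_nn_integral_insert[OF fI]) (use Ssets in \<open>simp add: Mp_def eqI\<close>)
  also have "\<dots> = (\<integral>\<^sup>+ v. 0 \<partial>(PiM I (\<lambda>_. lborel::real measure)))"
    by (intro nn_integral_cong) (simp add: ind)
  also have "\<dots> = 0" by simp
  finally have "emeasure Mp S = 0" .
  then have "S \<in> null_sets Mp" using Ssets by auto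
  then show ?thesis unfolding p_def[symmetric] Mp_def[symmetric]
    by (rule AE_I') (auto simp: S_def)
qed

lemma act_eq:
  assumes "\<forall>l<mlp_depth ns. \<forall>i<ns ! Suc l. (preact ns x w l i > 0) = (preact ns x w0 l i > 0)"
  shows "act ns x w = act ns x w0"
proof (intro ext)
  fix l i
  show "act ns x w l i = act ns x w0 l i"
  proof (cases "1 \<le> l \<and> l \<le> mlp_depth ns \<and> i < ns ! l")
    case True
    then obtain l' where l': "l = Suc l'" by (cases l) auto
    then show ?thesis using True assms unfolding act_def by auto
  next
    case False
    then show ?thesis unfolding act_def by auto
  qed
qed

lemma comp_le_norm:
  assumes "j < p"
  shows "\<bar>v j\<bar> \<le> norm_n p v"
proof -
  have "\<bar>v j\<bar> = sqrt ((v j)\<^sup>2)" by simp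
  also have "\<dots> \<le> norm_n p v" unfolding norm_n_def
    by (intro real_sqrt_le_mono member_le_sum) (use assms in auto)
  finally show ?thesis .
qed

lemma eps_lemma:
  assumes w0: "w0 \<in> space (PiM {..<num_params ns} (\<lambda>_. lborel::real measure))"
    and nz: "\<forall>l<mlp_depth ns. \<forall>i<ns ! Suc l. preact ns x w0 l i \<noteq> 0"
  shows "\<exists>\<epsilon>>0. \<forall>w \<in> space (PiM {..<num_params ns} (\<lambda>_. lborel::real measure)).
           norm_n (num_params ns) (\<lambda>i. w i - w0 i) < \<epsilon> \<longrightarrow> act ns x w = act ns x w0"
proof (rule ccontr)
  define p where "p = num_params ns"
  define M where "M = PiM {..<p} (\<lambda>_. lborel::real measure)"
  assume neg: "\<not> ?thesis"
  have "\<forall>k::nat. \<exists>w. w \<in> space M \<and> norm_n p (\<lambda>i. w i - w0 i) < inverse (real (Suc k)) \<and> act ns x w \<noteq> act ns x w0"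
  proof
    fix k :: nat
    have "inverse (real (Suc k)) > 0" by simp
    then show "\<exists>w. w \<in> space M \<and> norm_n p (\<lambda>i. w i - w0 i) < inverse (real (Suc k)) \<and> act ns x w \<noteq> act ns x w0"
      using neg unfolding M_def p_def by blast
  qed
  then obtain ws where ws: "\<And>k. ws k \<in> space M" "\<And>k. norm_n p (\<lambda>i. ws k i - w0 i) < inverse (real (Suc k))"
    "\<And>k. act ns x (ws k) \<noteq> act ns x w0" by metis
  have conv: "(\<lambda>k. ws k j) \<longlonglongrightarrow> w0 j" for j
  proof (cases "j < p")
    case True
    have "(\<lambda>k. ws k j - w0 j) \<longlonglongrightarrow> 0"
    proof (rule Lim_null_comparison)
      show "\<forall>\<^sub>F k in sequentially. norm (ws k j - w0 j) \<le> inverse (real (Suc k))"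
      proof (intro always_eventually allI)
        fix k
        have "\<bar>ws k j - w0 j\<bar> \<le> norm_n p (\<lambda>i. ws k i - w0 i)"
          using comp_le_norm[OF True, of "\<lambda>i. ws k i - w0 i"] by simp
        then show "norm (ws k j - w0 j) \<le> inverse (real (Suc k))"
          using ws(2)[of k] by simp
      qed
      show "(\<lambda>k. inverse (real (Suc k))) \<longlonglongrightarrow> 0" by (rule LIMSEQ_inverse_real_of_nat)
    qed
    then show ?thesis by (simp add: LIM_zero_iff)
  next
    case False
    have "ws k j = w0 j" for k
      using ws(1)[of k] w0 False unfolding M_def p_def by (auto simp: space_PiM PiE_def extensional_def)
    then show ?thesis by simp
  qed
  define K where "K = Sigma {..<mlp_depth ns} (\<lambda>l. {..<ns ! Suc l})"
  have fK: "finite K" unfolding K_def by auto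
  have ev: "\<forall>\<^sub>F k in sequentially. \<forall>li\<in>K. (preact ns x (ws k) (fst li) (snd li) > 0) = (preact ns x w0 (fst li) (snd li) > 0)"
  proof (rule eventually_ball_finite[OF fK], rule ballI)
    fix li assume "li \<in> K"
    then have ne: "preact ns x w0 (fst li) (snd li) \<noteq> 0" using nz unfolding K_def by auto
    have t: "(\<lambda>k. preact ns x (ws k) (fst li) (snd li)) \<longlonglongrightarrow> preact ns x w0 (fst li) (snd li)"
      by (rule preact_tendsto[OF conv])
    show "\<forall>\<^sub>F k in sequentially. (preact ns x (ws k) (fst li) (snd li) > 0) = (preact ns x w0 (fst li) (snd li) > 0)"
    proof (cases "preact ns x w0 (fst li) (snd li) > 0")
      case True
      show ?thesis using order_tendstoD(1)[OF t True] by (rule eventually_mono) (use True in auto)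
    next
      case False
      then have "preact ns x w0 (fst li) (snd li) < 0" using ne by auto
      show ?thesis using order_tendstoD(2)[OF t \<open>_ < 0\<close>] by (rule eventually_mono) (use False in auto)
    qed
  qed
  then obtain N where "\<forall>k\<ge>N. \<forall>li\<in>K. (preact ns x (ws k) (fst li) (snd li) > 0) = (preact ns x w0 (fst li) (snd li) > 0)"
    unfolding eventually_sequentially by blast
  then have "\<forall>li\<in>K. (preact ns x (ws N) (fst li) (snd li) > 0) = (preact ns x w0 (fst li) (snd li) > 0)"
    by blast
  then have "act ns x (ws N) = act ns x w0"
    by (intro act_eq) (auto simp: K_def)
  then show False using ws(3) by blast
qed


theorem proposition1:
  fixes ns :: "nat list"
  assumes "length ns \<ge> 3"
  shows "\<exists>B. B \<subseteq> space (lebesgue_n (num_params ns)) \<and>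
           B \<in> null_sets (lebesgue_n (num_params ns)) \<and>
           (\<forall>w0 \<in> space (lebesgue_n (num_params ns)) - B.
              \<exists>Z. Z \<subseteq> space (lebesgue_n (ns ! 0)) \<and>
                  Z \<in> null_sets (lebesgue_n (ns ! 0)) \<and>
                  (\<forall>x \<in> space (lebesgue_n (ns ! 0)) - Z.
                     \<exists>\<epsilon>>0. \<forall>w \<in> space (lebesgue_n (num_params ns)).
                        norm_n (num_params ns) (\<lambda>i. w i - w0 i) < \<epsilon> \<longrightarrow>
                        act ns x w = act ns x w0))"
proof -
  define p where "p = num_params ns"
  define n where "n = ns ! 0"
  define Mp where "Mp = PiM {..<p} (\<lambda>_. lborel::real measure)"
  define Mx where "Mx = PiM {..<n} (\<lambda>_. lborel::real measure)"
  define K where "K = Sigma {..<mlp_depth ns} (\<lambda>l. {..<ns ! Suc l})"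
  have fK: "finite K" unfolding K_def by auto
  interpret P: pair_sigma_finite Mx Mp
    unfolding pair_sigma_finite_def Mx_def Mp_def using PS.sigma_finite by auto
  have each: "AE w in Mp. AE x in Mx. preact ns x w (fst li) (snd li) \<noteq> 0" if "li \<in> K" for li
  proof -
    have meas: "{z \<in> space (Mx \<Otimes>\<^sub>M Mp). preact ns (fst z) (snd z) (fst li) (snd li) \<noteq> 0} \<in> sets (Mx \<Otimes>\<^sub>M Mp)"
    proof -
      have "(\<lambda>z. preact ns (fst z) (snd z) (fst li) (snd li)) \<in> borel_measurable (Mx \<Otimes>\<^sub>M Mp)"
        by (rule preact_meas) (auto simp: Mx_def Mp_def intro: measurable_compose[OF measurable_fst comp_meas] measurable_compose[OF measurable_snd comp_meas])
      then show ?thesis by measurable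
    qed
    have "\<forall>x. AE w in Mp. preact ns x w (fst li) (snd li) \<noteq> 0"
      using preact_null[of "fst li" ns "snd li"] that unfolding K_def Mp_def p_def
      by auto
    then have "AE x in Mx. AE w in Mp. preact ns x w (fst li) (snd li) \<noteq> 0"
      by (rule always_eventually)
    then show ?thesis using P.AE_commute[OF meas] by simp
  qed
  have "AE w in Mp. \<forall>li\<in>K. AE x in Mx. preact ns x w (fst li) (snd li) \<noteq> 0"
    using each fK by (simp add: AE_finite_all)
  then obtain B where B: "{w \<in> space Mp. \<not> (\<forall>li\<in>K. AE x in Mx. preact ns x w (fst li) (snd li) \<noteq> 0)} \<subseteq> B"
    "emeasure Mp B = 0" "B \<in> sets Mp" by (rule AE_E)
  show ?thesis
  proof (rule exI[of _ B], intro conjI ballI)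
    show "B \<subseteq> space (lebesgue_n (num_params ns))"
      using sets.sets_into_space[OF B(3)] by (simp add: lebesgue_n_def Mp_def p_def)
    show "B \<in> null_sets (lebesgue_n (num_params ns))"
      unfolding lebesgue_n_def using B(2,3) by (intro null_sets_completionI) (simp add: Mp_def p_def null_sets_def)
    fix w0 assume w0: "w0 \<in> space (lebesgue_n (num_params ns)) - B"
    then have w0s: "w0 \<in> space Mp" by (simp add: lebesgue_n_def Mp_def p_def)
    have "\<forall>li\<in>K. AE x in Mx. preact ns x w0 (fst li) (snd li) \<noteq> 0" using B(1) w0 w0s by blast
    then have "AE x in Mx. \<forall>li\<in>K. preact ns x w0 (fst li) (snd li) \<noteq> 0"
      using fK by (simp add: AE_finite_all)
    then obtain Z where Z: "{x \<in> space Mx. \<not> (\<forall>li\<in>K. preact ns x w0 (fst li) (snd li) \<noteq> 0)} \<subseteq> Z"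
      "emeasure Mx Z = 0" "Z \<in> sets Mx" by (rule AE_E)
    show "\<exists>Z. Z \<subseteq> space (lebesgue_n (ns ! 0)) \<and>
                  Z \<in> null_sets (lebesgue_n (ns ! 0)) \<and>
                  (\<forall>x \<in> space (lebesgue_n (ns ! 0)) - Z.
                     \<exists>\<epsilon>>0. \<forall>w \<in> space (lebesgue_n (num_params ns)).
                        norm_n (num_params ns) (\<lambda>i. w i - w0 i) < \<epsilon> \<longrightarrow>
                        act ns x w = act ns x w0)"
    proof (rule exI[of _ Z], intro conjI ballI)
      show "Z \<subseteq> space (lebesgue_n (ns ! 0))"
        using sets.sets_into_space[OF Z(3)] by (simp add: lebesgue_n_def Mx_def n_def)
      show "Z \<in> null_sets (lebesgue_n (ns ! 0))"
        unfolding lebesgue_n_def using Z(2,3) by (intro null_sets_completionI) (simp add: Mx_def n_def null_sets_def)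
      fix x assume x: "x \<in> space (lebesgue_n (ns ! 0)) - Z"
      then have "x \<in> space Mx" by (simp add: lebesgue_n_def Mx_def n_def)
      then have "\<forall>li\<in>K. preact ns x w0 (fst li) (snd li) \<noteq> 0" using Z(1) x by blast
      then have nz: "\<forall>l<mlp_depth ns. \<forall>i<ns ! Suc l. preact ns x w0 l i \<noteq> 0"
        unfolding K_def by auto
      show "\<exists>\<epsilon>>0. \<forall>w \<in> space (lebesgue_n (num_params ns)).
                        norm_n (num_params ns) (\<lambda>i. w i - w0 i) < \<epsilon> \<longrightarrow>
                        act ns x w = act ns x w0"
        using eps_lemma[OF _ nz] w0s by (simp add: lebesgue_n_def Mp_def p_def)
    qed
  qed
qed

end
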